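(* Let $A$ be a finite nonempty set and let $M\le A^{A}$ be a monoid (under composition, containing $\mathrm{id}_A$). Then $M^{*}$ is a preclone, i.e., $\mathrm{id}_A\in M^{*}$ and $M^{*}$ is closed under the operations $\zeta$, $\tau$ and $\circ$. Moreover, $M^{*}$ is closed under $\nabla$ if and only if $C\subseteq M$, where $C=\{\mathbf c_a\mid a\in A\}$ is the set of all constant unary maps $\mathbf c_a(x)=a$.
   Context: $\mathrm{Op}(A)$ denotes the set of all operations $f:A^n\to A$, $n\ge 1$. For $f\in\mathrm{Op}(A)$ of arity $n$, $i\in\{1,\dots,n\}$ and $\mathbf a=(a_1,\dots,a_{i-1},a_{i+1},\dots,a_n)\in A^{n-1}$, the translation $f_{\mathbf a,i}$ is the unary map $x\mapsto f(a_1,\dots,a_{i-1},x,a_{i+1},\dots,a_n)$; $\mathrm{trl}(f)$ is the set of all such translations (for unary $f$, $\mathrm{trl}(f)=\{f\}$). For $M\subseteq A^A$, $M^{*}:=\{f\in\mathrm{Op}(A)\mid \mathrm{trl}(f)\subseteq M\}$. For $f$ $n$-ary and $g$ $m$-ary: $(\zeta f)(x_1,\dots,x_n)=f(x_2,\dots,x_n,x_1)$ (and $\zeta f=f$ if $n=1$); $(\tau f)(x_1,x_2,x_3,\dots,x_n)=f(x_2,x_1,x_3,\dots,x_n)$ (and $\tau f=f$ if $n=1$); $(f\circ g)(x_1,\dots,x_{m+n-1})=f(g(x_1,\dots,x_m),x_{m+1},\dots,x_{m+n-1})$; $(\nabla f)(x_1,\dots,x_{n+1})=f(x_2,\dots,x_{n+1})$.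 A preclone is a subset of $\mathrm{Op}(A)$ containing $\mathrm{id}_A$ and closed under $\zeta,\tau,\circ$. *)

theory Defs
  imports Main
begin

text \<open>The finite nonempty base set A is rendered as a type 'a of class finite (A = UNIV).
An n-ary operation A^n -> A is represented as a pair (n, f) with f acting on lists of
length n; outside length-n lists f is fixed to undefined, so that the representation
is unique (extensional).\<close>

type_synonym 'a op = "nat \<times> ('a list \<Rightarrow> 'a)"

definition Op :: "'a op set" where
  "Op = {(n, f). n \<ge> 1 \<and> (\<forall>xs. length xs \<noteq> n \<longrightarrow> f xs = undefined)}"


definition trl :: "'a op \<Rightarrow> ('a \<Rightarrow> 'a) set" where
  "trl F = {(\<lambda>x. snd F (take (i - 1) as @ x # drop (i - 1) as)) | as i.
              length as = fst F - 1 \<and> 1 \<le> i \<and> i \<le> fst F}"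

definition star :: "('a \<Rightarrow> 'a) set \<Rightarrow> 'a op set" where
  "star M = {F \<in> Op. trl F \<subseteq> M}"

definition id_op :: "'a op" where
  "id_op = (1, \<lambda>xs. if length xs = 1 then hd xs else undefined)"

definition zeta :: "'a op \<Rightarrow> 'a op" where
  "zeta F = (fst F, \<lambda>xs. if length xs = fst F then snd F (tl xs @ [hd xs]) else undefined)"

definition tau :: "'a op \<Rightarrow> 'a op" where
  "tau F = (if fst F = 1 then F else
     (fst F, \<lambda>xs. if length xs = fst F then snd F (xs ! 1 # xs ! 0 # drop 2 xs) else undefined))"

definition comp_op :: "'a op \<Rightarrow> 'a op \<Rightarrow> 'a op" where
  "comp_op F G = (fst G + fst F - 1,
     \<lambda>xs. if length xs = fst G + fst F - 1 then snd F (snd G (take (fst G) xs) # drop (fst G) xs)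
          else undefined)"

definition nabla :: "'a op \<Rightarrow> 'a op" where
  "nabla F = (fst F + 1, \<lambda>xs. if length xs = fst F + 1 then snd F (tl xs) else undefined)"

definition preclone :: "'a op set \<Rightarrow> bool" where
  "preclone P \<longleftrightarrow> P \<subseteq> Op \<and> id_op \<in> P \<and> (\<forall>F\<in>P. zeta F \<in> P) \<and> (\<forall>F\<in>P. tau F \<in> P)
     \<and> (\<forall>F\<in>P. \<forall>G\<in>P. comp_op F G \<in> P)"

end

theory Submission
  imports Defs
begin

lemma trl_iff:
  "trl F = {(\<lambda>x. snd F (as @ x # bs)) | as bs. length as + length bs + 1 = fst F}"
proof (intro set_eqI iffI)
  fix h assume "h \<in> trl F"
  then obtain as i where h: "h = (\<lambda>x. snd F (take (i - 1) as @ x # drop (i - 1) as))"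
    and l: "length as = fst F - 1" "1 \<le> i" "i \<le> fst F"
    unfolding trl_def by blast
  have "length (take (i - 1) as) + length (drop (i - 1) as) + 1 = fst F"
    using l by simp
  then show "h \<in> {(\<lambda>x. snd F (as @ x # bs)) | as bs. length as + length bs + 1 = fst F}"
    using h by blast
next
  fix h assume "h \<in> {(\<lambda>x. snd F (as @ x # bs)) | as bs. length as + length bs + 1 = fst F}"
  then obtain as bs where h: "h = (\<lambda>x. snd F (as @ x # bs))"
    and l: "length as + length bs + 1 = fst F" by blast
  let ?i = "length as + 1"
  have "take (?i - 1) (as @ bs) = as" "drop (?i - 1) (as @ bs) = bs" by simp_all
  moreover have "length (as @ bs) = fst F - 1" "1 \<le> ?i" "?i \<le> fst F" using l by simp_all
  ultimately have "h = (\<lambda>x. snd F (take (?i - 1) (as @ bs) @ x # drop (?i - 1) (as @ bs)))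
      \<and> length (as @ bs) = fst F - 1 \<and> 1 \<le> ?i \<and> ?i \<le> fst F" by (simp add: h)
  then show "h \<in> trl F" unfolding trl_def by blast
qed

lemma star_iff:
  "F \<in> star M \<longleftrightarrow> F \<in> Op \<and>
     (\<forall>as bs. length as + length bs + 1 = fst F \<longrightarrow> (\<lambda>x. snd F (as @ x # bs)) \<in> M)"
  unfolding star_def trl_iff by blast

lemma Op_iff: "(n, f) \<in> Op \<longleftrightarrow> n \<ge> 1 \<and> (\<forall>xs. length xs \<noteq> n \<longrightarrow> f xs = undefined)"
  unfolding Op_def by simp

theorem proposition2p5:
  fixes M :: "('a::finite \<Rightarrow> 'a) set"
  assumes "id \<in> M" and "\<forall>f\<in>M. \<forall>g\<in>M. f \<circ> g \<in> M"
  shows "preclone (star M) \<and>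
         ((\<forall>F\<in>star M. nabla F \<in> star M) \<longleftrightarrow> (\<forall>a::'a. (\<lambda>x. a) \<in> M))"
proof -
  have sub: "star M \<subseteq> Op" unfolding star_def by blast
  have idm: "id_op \<in> star M"
  proof -
    have "(\<lambda>x. snd id_op (as @ x # bs)) \<in> M" if "length as + length bs + 1 = fst id_op" for as bs :: "'a list"
    proof -
      have "as = []" "bs = []" using that by (auto simp: id_op_def)
      then have "(\<lambda>x. snd id_op (as @ x # bs)) = id" by (auto simp: id_op_def)
      then show ?thesis using assms(1) by simp
    qed
    moreover have "id_op \<in> Op" by (simp add: id_op_def Op_iff)
    ultimately show ?thesis unfolding star_iff by blast
  qed
  have zeta: "zeta F \<in> star M" if F: "F \<in> star M" for F
  proof -
    obtain n f where Fd: "F = (n, f)" by (cases F)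
    have Fo: "n \<ge> 1" "\<forall>xs. length xs \<noteq> n \<longrightarrow> f xs = undefined" using F sub Fd by (auto simp: Op_iff)
    have Ft: "\<And>as bs. length as + length bs + 1 = n \<Longrightarrow> (\<lambda>x. f (as @ x # bs)) \<in> M"
      using F Fd unfolding star_iff by auto
    have "(\<lambda>x. snd (zeta F) (as @ x # bs)) \<in> M" if l: "length as + length bs + 1 = fst (zeta F)" for as bs
    proof (cases as)
      case Nil
      then have "(\<lambda>x. snd (zeta F) (as @ x # bs)) = (\<lambda>x. f (bs @ x # []))"
        using l by (auto simp: zeta_def Fd)
      then show ?thesis using Ft[of bs "[]"] l Nil by (simp add: zeta_def Fd)
    next
      case (Cons a as')
      then have "(\<lambda>x. snd (zeta F) (as @ x # bs)) = (\<lambda>x. f (as' @ x # bs @ [a]))"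
        using l by (auto simp: zeta_def Fd)
      then show ?thesis using Ft[of as' "bs @ [a]"] l Cons by (simp add: zeta_def Fd)
    qed
    moreover have "zeta F \<in> Op" using Fo by (simp add: zeta_def Fd Op_iff)
    ultimately show ?thesis unfolding star_iff by blast
  qed
  have tau: "tau F \<in> star M" if F: "F \<in> star M" for F
  proof (cases "fst F = 1")
    case True then show ?thesis using F by (simp add: tau_def)
  next
    case False
    obtain n f where Fd: "F = (n, f)" by (cases F)
    have Fo: "n \<ge> 1" "\<forall>xs. length xs \<noteq> n \<longrightarrow> f xs = undefined" using F sub Fd by (auto simp: Op_iff)
    have n2: "n \<ge> 2" using Fo False Fd by simp
    have Ft: "\<And>as bs. length as + length bs + 1 = n \<Longrightarrow> (\<lambda>x. f (as @ x # bs)) \<in> M"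
      using F Fd unfolding star_iff by auto
    have td: "tau F = (n, \<lambda>xs. if length xs = n then f (xs ! 1 # xs ! 0 # drop 2 xs) else undefined)"
      using False Fd unfolding tau_def by auto
    have "(\<lambda>x. snd (tau F) (as @ x # bs)) \<in> M" if l: "length as + length bs + 1 = fst (tau F)" for as bs
    proof (cases as)
      case Nil
      then obtain b bs' where bs: "bs = b # bs'" using l n2 td by (cases bs) auto
      have "(\<lambda>x. snd (tau F) (as @ x # bs)) = (\<lambda>x. f ([b] @ x # bs'))"
        using l Nil bs by (auto simp: td)
      then show ?thesis using Ft[of "[b]" bs'] l Nil bs td by simp
    next
      case (Cons a as')
      show ?thesis
      proof (cases as')
        case Nil
        have "(\<lambda>x. snd (tau F) (as @ x # bs)) = (\<lambda>x. f ([] @ x # a # bs))"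
          using l Nil Cons by (auto simp: td)
        then show ?thesis using Ft[of "[]" "a # bs"] l Nil Cons td by simp
      next
        case (Cons a' as'')
        have "(\<lambda>x. snd (tau F) (as @ x # bs)) = (\<lambda>x. f ((a' # a # as'') @ x # bs))"
          using l Cons \<open>as = a # as'\<close> by (auto simp: td)
        then show ?thesis using Ft[of "a' # a # as''" bs] l Cons \<open>as = a # as'\<close> td by simp
      qed
    qed
    moreover have "tau F \<in> Op" using Fo by (simp add: td Op_iff)
    ultimately show ?thesis unfolding star_iff by blast
  qed
  have comp: "comp_op F G \<in> star M" if F: "F \<in> star M" and G: "G \<in> star M" for F G
  proof -
    obtain n f where Fd: "F = (n, f)" by (cases F)
    obtain m g where Gd: "G = (m, g)" by (cases G)
    have Fo: "n \<ge> 1" using F sub Fd by (auto simp: Op_iff)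
    have Go: "m \<ge> 1" using G sub Gd by (auto simp: Op_iff)
    have Ft: "\<And>as bs. length as + length bs + 1 = n \<Longrightarrow> (\<lambda>x. f (as @ x # bs)) \<in> M"
      using F Fd unfolding star_iff by auto
    have Gt: "\<And>as bs. length as + length bs + 1 = m \<Longrightarrow> (\<lambda>x. g (as @ x # bs)) \<in> M"
      using G Gd unfolding star_iff by auto
    have cd: "comp_op F G = (m + n - 1, \<lambda>xs. if length xs = m + n - 1 then f (g (take m xs) # drop m xs) else undefined)"
      unfolding comp_op_def Fd Gd by (simp add: fun_eq_iff)
    have "(\<lambda>x. snd (comp_op F G) (as @ x # bs)) \<in> M" if l: "length as + length bs + 1 = fst (comp_op F G)" for as bs
    proof -
    have e: "snd (comp_op F G) (as @ x # bs) = f (g (take m (as @ x # bs)) # drop m (as @ x # bs))" for x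
      using l by (simp add: cd del: take_append drop_append)
    show ?thesis
    proof (cases "length as < m")
      case True
      define k where "k = m - length as - 1"
      have tk: "take m (as @ x # bs) = as @ x # take k bs" for x
        using True by (simp add: k_def take_Cons')
      have dk: "drop m (as @ x # bs) = drop k bs" for x
        using True by (simp add: k_def drop_Cons')
      have "(\<lambda>x. snd (comp_op F G) (as @ x # bs)) = (\<lambda>y. f ([] @ y # drop k bs)) \<circ> (\<lambda>x. g (as @ x # take k bs))"
        by (simp only: e tk dk comp_def append_Nil)
      moreover have "(\<lambda>y. f ([] @ y # drop k bs)) \<in> M" using l cd Ft[of "[]" "drop k bs"] True k_def Fo Go by simp
      moreover have "(\<lambda>x. g (as @ x # take k bs)) \<in> M" using l cd Gt[of as "take k bs"] True k_def Fo by simp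
      ultimately show ?thesis using assms(2) by simp
    next
      case False
      have tk: "take m (as @ x # bs) = take m as" for x using False by simp
      have dk: "drop m (as @ x # bs) = drop m as @ x # bs" for x using False by simp
      have "(\<lambda>x. snd (comp_op F G) (as @ x # bs)) = (\<lambda>x. f ((g (take m as) # drop m as) @ x # bs))"
        by (simp only: e tk dk append_Cons)
      moreover have "(\<lambda>x. f ((g (take m as) # drop m as) @ x # bs)) \<in> M"
        using Ft[of "g (take m as) # drop m as" bs] l cd False Go by simp
      ultimately show ?thesis by simp
    qed
    qed
    moreover have "comp_op F G \<in> Op" using Fo Go by (simp add: cd Op_iff)
    ultimately show ?thesis unfolding star_iff by blast
  qed
  have pc: "preclone (star M)" unfolding preclone_def using sub idm zeta tau comp by blast
  have nab: "(\<forall>F\<in>star M. nabla F \<in> star M) \<longleftrightarrow> (\<forall>a::'a. (\<lambda>x. a) \<in> M)"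
  proof
    assume h: "\<forall>F\<in>star M. nabla F \<in> star M"
    show "\<forall>a::'a. (\<lambda>x. a) \<in> M"
    proof
      fix a :: 'a
      have "nabla id_op \<in> star M" using h idm by blast
      then have A: "\<forall>as bs. length as + length bs + 1 = fst (nabla (id_op::'a op)) \<longrightarrow> (\<lambda>x. snd (nabla id_op) (as @ x # bs)) \<in> M"
        unfolding star_iff by blast
      moreover have B: "fst (nabla (id_op::'a op)) = 2" by (simp add: nabla_def id_op_def)
      have "(\<lambda>x. snd (nabla id_op) ([] @ x # [a])) \<in> M" using A[rule_format, of "[]" "[a]"] B by simp
      moreover have "(\<lambda>x. snd (nabla id_op) ([] @ x # [a])) = (\<lambda>x. a)"
        by (simp add: nabla_def id_op_def)
      ultimately show "(\<lambda>x. a) \<in> M" by simp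
    qed
  next
    assume c: "\<forall>a::'a. (\<lambda>x. a) \<in> M"
    show "\<forall>F\<in>star M. nabla F \<in> star M"
    proof
      fix F assume F: "F \<in> star M"
      obtain n f where Fd: "F = (n, f)" by (cases F)
      have Fo: "n \<ge> 1" using F sub Fd by (auto simp: Op_iff)
      have Ft: "\<And>as bs. length as + length bs + 1 = n \<Longrightarrow> (\<lambda>x. f (as @ x # bs)) \<in> M"
        using F Fd unfolding star_iff by auto
      have nd: "nabla F = (n + 1, \<lambda>xs. if length xs = n + 1 then f (tl xs) else undefined)"
        unfolding nabla_def Fd by (simp add: fun_eq_iff)
      have "(\<lambda>x. snd (nabla F) (as @ x # bs)) \<in> M" if l: "length as + length bs + 1 = fst (nabla F)" for as bs
      proof (cases as)
        case Nil
        then have "(\<lambda>x. snd (nabla F) (as @ x # bs)) = (\<lambda>x. f bs)" using l by (auto simp: nd)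
        then show ?thesis using c by simp
      next
        case (Cons a as')
        then have "(\<lambda>x. snd (nabla F) (as @ x # bs)) = (\<lambda>x. f (as' @ x # bs))" using l by (auto simp: nd)
        then show ?thesis using Ft[of as' bs] l Cons nd by simp
      qed
      moreover have "nabla F \<in> Op" using Fo by (simp add: nd Op_iff)
      ultimately show "nabla F \<in> star M" unfolding star_iff by blast
    qed
  qed
  show ?thesis using pc nab by blast
qed

end
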